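(* There exist constants $A,B>0$ and $\lambda\in(0,1)$ such that for every $f\in\mathcal{B}$ and every $n\in\mathbb{N}$, $$\|\mathcal{L}^nf\|_s\le A\lambda^n\|f\|_s+B\|f\|_{L^1}.$$
   Context: Let $b:\mathbb{R}^d\to\mathbb{R}^d$ satisfy (A) local Lipschitz continuity: for each $x_0\in\mathbb{R}^d$ there are $K>0$, $\delta_0>0$ with $|b(x_0)-b(x)|\le K|x_0-x|$ whenever $|x_0-x|<\delta_0$; and (B) dissipativity: there are $c_1\in\mathbb{R}$, $c_2>0$ with $\langle b(x),x\rangle\le c_1-c_2|x|^2$ for all $x\in\mathbb{R}^d$. Let $X^x_t$ be the solution of $dX_t^x=b(X_t^x)\,dt+dW_t$, $X_0^x=x$, with $W$ a standard Brownian motion in $\mathbb{R}^d$, and let $\theta_t$ be the flow of $\dot\theta=b(\theta)$. It is known that the law of $X_1^x$ has a density $\kappa(x,y)$ (in $y$, w.r.t. Lebesgue measure), continuous in $(x,y)$, and that there are constants $\lambda_0,\lambda_1\in(0,1]$, $C_0,C_1\ge 1$ such that for all $x,y$: $C_0^{-1}e^{-|\theta_1(x)-y|^2/\lambda_0}\le\kappa(x,y)\le C_0e^{-\lambda_0|\theta_1(x)-y|^2}$ and $|\nabla_x\kappa(x,y)|,|\nabla_y\kappa(x,y)|\le C_1e^{-\lambda_1|\theta_1(x)-y|^2}$. The transfer operator $\mathcal{L}=\mathcal{L}_0:L^1(\mathbb{R}^d)\to L^1(\mathbb{R}^d)$ is $\mathcal{L}f(y)=\int_{\mathbb{R}^d}\kappa(x,y)f(x)\,dx$.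 Spaces: for $\alpha\ge0$ let $\rho_\alpha(x)=(1+|x|^2)^{\alpha/2}$ and let $L^1_\alpha$ be the space of measurable $f:\mathbb{R}^d\to\mathbb{R}$ with $\|f\|_{L^1_\alpha}=\int\rho_\alpha(x)|f(x)|\,dx<\infty$. Fix a compact set $D\subset\mathbb{R}^d$ (a compact neighbourhood of $0$). The strong norm is $\|f\|_s=\|f\|_{L^1_2}+\|1_Df\|_{L^2}$ and the strong space is $\mathcal{B}=\{f\in L^1_2:\|f\|_s<\infty\}$. Set $V_{\mathcal{B}}=\{f\in\mathcal{B}:\int f\,dx=0\}$ and $V_{L^1}=\{f\in L^1:\int f\,dx=0\}$. *)

theory Defs
  imports "HOL-Probability.Probability"
begin

definition locally_lipschitz_drift :: "('a::euclidean_space \<Rightarrow> 'a) \<Rightarrow> bool" where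
  "locally_lipschitz_drift b \<longleftrightarrow>
     (\<forall>x0. \<exists>K>0. \<exists>\<delta>0>0. \<forall>x. norm (x0 - x) < \<delta>0 \<longrightarrow> norm (b x0 - b x) \<le> K * norm (x0 - x))"

definition dissipative_drift :: "('a::euclidean_space \<Rightarrow> 'a) \<Rightarrow> bool" where
  "dissipative_drift b \<longleftrightarrow> (\<exists>c1 c2::real. c2 > 0 \<and> (\<forall>x. b x \<bullet> x \<le> c1 - c2 * (norm x)\<^sup>2))"

definition is_flow :: "('a::euclidean_space \<Rightarrow> 'a) \<Rightarrow> (real \<Rightarrow> 'a \<Rightarrow> 'a) \<Rightarrow> bool" where
  "is_flow b \<theta> \<longleftrightarrow> (\<forall>x. \<theta> 0 x = x \<and>
     (\<forall>t\<ge>0. ((\<lambda>s. \<theta> s x) has_vector_derivative b (\<theta> t x)) (at t within {0..})))"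

definition gauss_density :: "real \<Rightarrow> 'a::euclidean_space \<Rightarrow> real" where
  "gauss_density v x = (\<Prod>i\<in>Basis. normal_density 0 (sqrt v) (x \<bullet> i))"

definition is_brownian_motion :: "'w measure \<Rightarrow> (real \<Rightarrow> 'w \<Rightarrow> 'a::euclidean_space) \<Rightarrow> bool" where
  "is_brownian_motion M W \<longleftrightarrow>
     prob_space M \<and>
     (\<forall>t. W t \<in> borel_measurable M) \<and>
     (\<forall>\<omega>\<in>space M. W 0 \<omega> = 0 \<and> continuous_on {0..} (\<lambda>t. W t \<omega>)) \<and>
     (\<forall>s t. 0 \<le> s \<and> s < t \<longrightarrow>
        distributed M lborel (\<lambda>\<omega>. W t \<omega> - W s \<omega>) (\<lambda>x. ennreal (gauss_density (t - s) x))) \<and>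
     (\<forall>ts::real list. sorted_wrt (<) ts \<and> (\<forall>t\<in>set ts. 0 \<le> t) \<longrightarrow>
        prob_space.indep_vars M (\<lambda>_. borel)
          (\<lambda>i \<omega>. W (ts ! Suc i) \<omega> - W (ts ! i) \<omega>) {..<length ts - 1})"

definition is_sde_solution ::
  "'w measure \<Rightarrow> ('a::euclidean_space \<Rightarrow> 'a) \<Rightarrow> (real \<Rightarrow> 'w \<Rightarrow> 'a) \<Rightarrow> ('a \<Rightarrow> real \<Rightarrow> 'w \<Rightarrow> 'a) \<Rightarrow> bool" where
  "is_sde_solution M b W X \<longleftrightarrow>
     (\<forall>x. \<forall>\<omega>\<in>space M. continuous_on {0..} (\<lambda>t. X x t \<omega>) \<and>
        (\<forall>t\<ge>0. X x t \<omega> = x + integral {0..t} (\<lambda>s. b (X x s \<omega>)) + W t \<omega>))"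

definition transfer_op :: "('a::euclidean_space \<Rightarrow> 'a \<Rightarrow> real) \<Rightarrow> ('a \<Rightarrow> real) \<Rightarrow> 'a \<Rightarrow> real" where
  "transfer_op \<kappa> f = (\<lambda>y. \<integral>x. \<kappa> x y * f x \<partial>lborel)"

definition rho :: "real \<Rightarrow> 'a::euclidean_space \<Rightarrow> real" where
  "rho \<alpha> x = (1 + (norm x)\<^sup>2) powr (\<alpha> / 2)"

text \<open>Norms, valued in [0, infinity] so that infinite norms are not silently truncated.\<close>
definition L1w_norm :: "real \<Rightarrow> ('a::euclidean_space \<Rightarrow> real) \<Rightarrow> ennreal" where
  "L1w_norm \<alpha> f = (\<integral>\<^sup>+ x. ennreal (rho \<alpha> x * \<bar>f x\<bar>) \<partial>lborel)"

definition L1_norm :: "('a::euclidean_space \<Rightarrow> real) \<Rightarrow> ennreal" where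
  "L1_norm f = (\<integral>\<^sup>+ x. ennreal \<bar>f x\<bar> \<partial>lborel)"

definition ennsqrt :: "ennreal \<Rightarrow> ennreal" where
  "ennsqrt I = (if I = \<infinity> then \<infinity> else ennreal (sqrt (enn2real I)))"

definition L2_on_norm :: "'a set \<Rightarrow> ('a::euclidean_space \<Rightarrow> real) \<Rightarrow> ennreal" where
  "L2_on_norm D f = ennsqrt (\<integral>\<^sup>+ x. indicator D x * ennreal ((f x)\<^sup>2) \<partial>lborel)"

definition strong_norm :: "'a set \<Rightarrow> ('a::euclidean_space \<Rightarrow> real) \<Rightarrow> ennreal" where
  "strong_norm D f = L1w_norm 2 f + L2_on_norm D f"

definition strong_space :: "'a::euclidean_space set \<Rightarrow> ('a \<Rightarrow> real) set" where
  "strong_space D = {f. f \<in> borel_measurable lborel \<and> strong_norm D f < \<infinity>}"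

end

theory Submission
  imports Defs
begin

lemma kmeas:
  fixes \<kappa> :: "'a::euclidean_space \<Rightarrow> 'a \<Rightarrow> real"
  assumes "continuous_on UNIV (\<lambda>(x, y). \<kappa> x y)"
  shows "(\<lambda>(x, y). \<kappa> x y) \<in> borel_measurable (lborel \<Otimes>\<^sub>M lborel)"
proof -
  have m: "(\<lambda>(x, y). \<kappa> x y) \<in> borel_measurable borel"
    using assms by (rule borel_measurable_continuous_onI)
  have "sets (lborel \<Otimes>\<^sub>M lborel) = sets (borel \<Otimes>\<^sub>M borel :: ('a\<times>'a) measure)"
    by (rule sets_pair_measure_cong) (simp_all only: sets_lborel)
  also have "\<dots> = sets (borel :: ('a\<times>'a) measure)" by (simp only: borel_prod)
  finally have s: "sets (lborel \<Otimes>\<^sub>M lborel) = sets (borel :: ('a\<times>'a) measure)" .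
  show ?thesis using m measurable_cong_sets[OF s refl] by blast
qed

lemma flow_bound:
  fixes b :: "'a::euclidean_space \<Rightarrow> 'a" and \<theta> :: "real \<Rightarrow> 'a \<Rightarrow> 'a"
  assumes flow: "is_flow b \<theta>" and diss: "\<And>x. b x \<bullet> x \<le> c1 - c2 * (norm x)\<^sup>2" and c2: "c2 > 0"
  shows "(norm (\<theta> 1 x))\<^sup>2 \<le> exp (-2*c2) * (norm x)\<^sup>2 + \<bar>c1\<bar> / c2"
proof -
  define u where "u s = \<theta> s x \<bullet> \<theta> s x" for s
  define w where "w = (\<lambda>s. exp (2 * c2 * s) * (u s - c1 / c2))"
  have der0: "((\<lambda>s. \<theta> s x) has_vector_derivative b (\<theta> t x)) (at t within {0..})" if "t \<ge> 0" for t
    using flow that unfolding is_flow_def by blast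
  have contt: "continuous_on {0..1} (\<lambda>s. \<theta> s x)"
  proof -
    have "continuous_on {0..} (\<lambda>s. \<theta> s x)"
      unfolding continuous_on_eq_continuous_within
      using der0 has_vector_derivative_continuous by (metis atLeast_iff)
    then show ?thesis by (rule continuous_on_subset) auto
  qed
  have contw: "continuous_on {0..1} w"
    unfolding w_def u_def using contt by (intro continuous_intros)
  have dw: "\<exists>y. (w has_real_derivative y) (at t) \<and> y \<le> 0" if t: "0 < t" "t < 1" for t
  proof -
    define v where "v = b (\<theta> t x)"
    have d1: "((\<lambda>s. \<theta> s x) has_vector_derivative v) (at t)"
      using der0[of t] t at_within_interior[of t "{0..}"] by (simp add: v_def)
    then have d1': "((\<lambda>s. \<theta> s x) has_derivative (\<lambda>h. h *\<^sub>R v)) (at t)"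
      by (simp add: has_vector_derivative_def)
    have d2: "(u has_derivative (\<lambda>h. \<theta> t x \<bullet> (h *\<^sub>R v) + (h *\<^sub>R v) \<bullet> \<theta> t x)) (at t)"
      unfolding u_def by (rule bounded_bilinear.FDERIV[OF bounded_bilinear_inner d1' d1'])
    have eq: "(\<lambda>h. \<theta> t x \<bullet> (h *\<^sub>R v) + (h *\<^sub>R v) \<bullet> \<theta> t x) = (*) (2 * (v \<bullet> \<theta> t x))"
      by (auto simp: fun_eq_iff inner_commute algebra_simps)
    have du: "(u has_real_derivative 2 * (v \<bullet> \<theta> t x)) (at t)"
      using d2 unfolding eq has_field_derivative_def .
    have dW: "(w has_real_derivative
        exp (2*c2*t) * (2*c2) * (u t - c1/c2) + exp (2*c2*t) * (2 * (v \<bullet> \<theta> t x))) (at t)"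
      unfolding w_def
      by (auto intro!: derivative_eq_intros du)
    have "v \<bullet> \<theta> t x \<le> c1 - c2 * u t"
      using diss[of "\<theta> t x"] by (simp add: v_def u_def power2_norm_eq_inner)
    then have "(2*c2) * (u t - c1/c2) + (2 * (v \<bullet> \<theta> t x)) \<le> 0"
      using c2 by (simp add: algebra_simps)
    then have "exp (2*c2*t) * ((2*c2) * (u t - c1/c2) + (2 * (v \<bullet> \<theta> t x))) \<le> 0"
      by (simp add: mult_nonneg_nonpos)
    moreover have "exp (2*c2*t) * (2*c2) * (u t - c1/c2) + exp (2*c2*t) * (2 * (v \<bullet> \<theta> t x))
       = exp (2*c2*t) * ((2*c2) * (u t - c1/c2) + (2 * (v \<bullet> \<theta> t x)))"
      by (simp only: distrib_left mult.assoc)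
    ultimately show ?thesis using dW by (intro exI[of _ "exp (2*c2*t) * (2*c2) * (u t - c1/c2) + exp (2*c2*t) * (2 * (v \<bullet> \<theta> t x))"]) simp
  qed
  have "w 1 \<le> w 0"
    by (rule DERIV_nonpos_imp_decreasing_open[of 0 1 w]) (use dw contw in auto)
  then have "exp (2*c2) * (u 1 - c1/c2) \<le> u 0 - c1/c2" by (simp add: w_def)
  then have "u 1 - c1/c2 \<le> exp (-2*c2) * (u 0 - c1/c2)"
    by (simp add: exp_minus field_simps)
  moreover have "u 0 = (norm x)\<^sup>2" using flow by (simp add: u_def is_flow_def power2_norm_eq_inner)
  moreover have "u 1 = (norm (\<theta> 1 x))\<^sup>2" by (simp add: u_def power2_norm_eq_inner)
  moreover have "c1/c2 - exp (-2*c2) * (c1/c2) \<le> \<bar>c1\<bar>/c2"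
  proof -
    have e: "0 < exp (-2*c2)" "exp (-2*c2) \<le> 1" using c2 by auto
    have "c1/c2 - exp (-2*c2) * (c1/c2) = (1 - exp (-2*c2)) * (c1/c2)" by (simp add: algebra_simps)
    also have "\<dots> \<le> (1 - exp (-2*c2)) * (\<bar>c1\<bar>/c2)"
      using e c2 by (intro mult_left_mono) (auto simp: divide_right_mono)
    also have "\<dots> \<le> \<bar>c1\<bar>/c2" by (rule mult_left_le_one_le) (use e c2 in auto)
    finally show ?thesis .
  qed
  ultimately show ?thesis by (simp add: algebra_simps)
qed

lemma gauss_density_eq:
  assumes v: "v > 0"
  shows "gauss_density v (z::'a::euclidean_space) = (1 / sqrt (2 * pi * v)) ^ DIM('a) * exp (- (norm z)\<^sup>2 / (2 * v))"
proof -
  have "gauss_density v z = (\<Prod>i\<in>Basis. (1 / sqrt (2 * pi * v)) * exp (- (z \<bullet> i)\<^sup>2 / (2 * v)))"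
    unfolding gauss_density_def normal_density_def using v by simp
  also have "\<dots> = (1 / sqrt (2 * pi * v)) ^ DIM('a) * (\<Prod>i\<in>Basis. exp (- (z \<bullet> i)\<^sup>2 / (2 * v)))"
    by (simp only: prod.distrib prod_constant)
  also have "(\<Prod>i\<in>Basis. exp (- (z \<bullet> i)\<^sup>2 / (2 * v))) = exp (\<Sum>i\<in>Basis. - (z \<bullet> i)\<^sup>2 / (2 * v))"
    by (simp add: exp_sum)
  also have "(\<Sum>i\<in>Basis. - (z \<bullet> i)\<^sup>2 / (2 * v)) = - (\<Sum>i\<in>Basis. (z \<bullet> i)\<^sup>2) / (2 * v)"
    by (simp add: sum_divide_distrib[symmetric] sum_negf)
  also have "(\<Sum>i\<in>Basis. (z \<bullet> i)\<^sup>2) = (norm z)\<^sup>2"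
    unfolding power2_norm_eq_inner by (simp add: euclidean_inner[of z z] power2_eq_square)
  finally show ?thesis .
qed

lemma dist_mass:
  assumes "distributed M lborel X (\<lambda>y. ennreal (k y))" "prob_space M"
  shows "(\<integral>\<^sup>+ y. ennreal (k y) \<partial>lborel) = 1"
proof -
  have h1: "emeasure M (X -` UNIV \<inter> space M) = (\<integral>\<^sup>+x. ennreal (k x) * indicator UNIV x \<partial>lborel)"
    by (rule distributed_emeasure[OF assms(1)]) simp
  have h2: "X -` UNIV \<inter> space M = space M" by blast
  have h3: "(\<lambda>x. ennreal (k x) * indicator UNIV x) = (\<lambda>x. ennreal (k x))"
    by (simp add: fun_eq_iff)
  have "1 = emeasure M (space M)" using prob_space.emeasure_space_1[OF assms(2)] by (rule sym)
  also have "\<dots> = emeasure M (X -` UNIV \<inter> space M)" by (simp only: h2)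
  also have "\<dots> = (\<integral>\<^sup>+x. ennreal (k x) * indicator UNIV x \<partial>lborel)" by (rule h1)
  also have "\<dots> = (\<integral>\<^sup>+x. ennreal (k x) \<partial>lborel)" by (simp only: h3)
  finally show ?thesis by (rule sym)
qed

lemma gauss_fin:
  fixes W :: "real \<Rightarrow> 'w \<Rightarrow> 'a::euclidean_space"
  assumes BM: "is_brownian_motion M W" and v: "v > 0"
  shows "(\<integral>\<^sup>+ z. ennreal (exp (- (norm z)\<^sup>2 / (2 * v))) \<partial>(lborel::'a measure)) < \<infinity>"
proof -
  have "\<forall>s t. 0 \<le> s \<and> s < t \<longrightarrow> distributed M lborel (\<lambda>\<omega>. W t \<omega> - W s \<omega>) (\<lambda>x. ennreal (gauss_density (t - s) x))"
    using BM unfolding is_brownian_motion_def by blast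
  from this[rule_format, of 0 v] v
  have "distributed M lborel (\<lambda>\<omega>. W v \<omega> - W 0 \<omega>) (\<lambda>x. ennreal (gauss_density v x))"
    by simp
  then have m1: "(\<integral>\<^sup>+ z. ennreal (gauss_density v z) \<partial>(lborel::'a measure)) = 1"
    using dist_mass BM unfolding is_brownian_motion_def by fastforce
  define K where "K = (1 / sqrt (2 * pi * v)) ^ DIM('a)"
  have K: "K > 0" using v by (simp add: K_def)
  have "(\<integral>\<^sup>+ z. ennreal (exp (- (norm z)\<^sup>2 / (2 * v))) \<partial>(lborel::'a measure))
      = (\<integral>\<^sup>+ z. ennreal (1/K) * ennreal (gauss_density v (z::'a)) \<partial>lborel)"
  proof (rule nn_integral_cong)
    fix z :: 'a
    have "exp (- (norm z)\<^sup>2 / (2 * v)) = (1/K) * gauss_density v z"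
      using K v by (simp add: gauss_density_eq K_def)
    then show "ennreal (exp (- (norm z)\<^sup>2 / (2 * v))) = ennreal (1 / K) * ennreal (gauss_density v z)"
      using K by (simp add: ennreal_mult[symmetric] gauss_density_def prod_nonneg)
  qed
  also have "\<dots> = ennreal (1/K) * (\<integral>\<^sup>+ z. ennreal (gauss_density v (z::'a)) \<partial>lborel)"
    by (rule nn_integral_cmult) (simp add: gauss_density_def)
  also have "\<dots> < \<infinity>" using m1 by simp
  finally show ?thesis .
qed

lemma moment_bound:
  fixes l s :: real
  assumes "l > 0" "s \<ge> 0"
  shows "s * exp (- l * s) \<le> (2 / l) * exp (- (s / (2 * (1/l))))"
proof -
  define a where "a = l * s / 2"
  have a: "a \<ge> 0" using assms by (simp add: a_def)
  have "a \<le> exp a" using exp_ge_add_one_self[of a] by linarith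
  then have "a * exp (-a) \<le> 1" by (simp add: exp_minus field_simps)
  have "s * exp (- l * s) = (2 / l) * (a * exp (-a)) * exp (-a)"
    using assms by (simp add: a_def field_simps exp_add[symmetric])
  also have "\<dots> \<le> (2 / l) * 1 * exp (-a)"
    using \<open>a * exp (-a) \<le> 1\<close> assms by (intro mult_right_mono mult_left_mono) auto
  also have "\<dots> = (2 / l) * exp (- (s / (2 * (1/l))))" by (simp add: a_def)
  finally show ?thesis .
qed

lemma rho2: "rho 2 (y::'a::euclidean_space) = 1 + (norm y)\<^sup>2"
  unfolding rho_def by (simp add: add_pos_nonneg)

lemma rho_meas[measurable]: "(rho 2 :: 'a::euclidean_space \<Rightarrow> real) \<in> borel_measurable lborel"
  unfolding rho2[abs_def] by measurable

lemma op_pointwise: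
  fixes \<kappa> :: "'a::euclidean_space \<Rightarrow> 'a \<Rightarrow> real"
  assumes kpos: "\<And>x y. 0 \<le> \<kappa> x y"
  shows "ennreal \<bar>transfer_op \<kappa> g y\<bar> \<le> (\<integral>\<^sup>+x. ennreal (\<kappa> x y) * ennreal \<bar>g x\<bar> \<partial>lborel)"
proof (cases "integrable lborel (\<lambda>x. \<kappa> x y * g x)")
  case True
  have "ennreal \<bar>transfer_op \<kappa> g y\<bar> = ennreal (norm (\<integral>x. \<kappa> x y * g x \<partial>lborel))"
    by (simp add: transfer_op_def)
  also have "\<dots> \<le> (\<integral>\<^sup>+x. norm (\<kappa> x y * g x) \<partial>lborel)"
    using integral_norm_bound_ennreal[OF True] .
  also have "\<dots> = (\<integral>\<^sup>+x. ennreal (\<kappa> x y) * ennreal \<bar>g x\<bar> \<partial>lborel)"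
    using kpos by (intro nn_integral_cong) (simp add: abs_mult ennreal_mult)
  finally show ?thesis .
next
  case False
  then show ?thesis by (simp add: transfer_op_def not_integrable_integral_eq)
qed

lemma op_bounds:
  fixes \<kappa> :: "'a::euclidean_space \<Rightarrow> 'a \<Rightarrow> real"
  assumes km: "(\<lambda>(x,y). \<kappa> x y) \<in> borel_measurable (lborel \<Otimes>\<^sub>M lborel)"
  and kpos: "\<And>x y. 0 \<le> \<kappa> x y"
  and kmass: "\<And>x. (\<integral>\<^sup>+y. ennreal (\<kappa> x y) \<partial>lborel) = 1"
  and kmom: "\<And>x. (\<integral>\<^sup>+y. ennreal (rho 2 y * \<kappa> x y) \<partial>lborel) \<le> ennreal (\<gamma> * rho 2 x + C)"
  and \<gamma>: "\<gamma> \<ge> 0" and C: "C \<ge> 0"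
  and g[measurable]: "g \<in> borel_measurable lborel"
  shows "transfer_op \<kappa> g \<in> borel_measurable lborel"
    and "L1_norm (transfer_op \<kappa> g) \<le> L1_norm g"
    and "L1w_norm 2 (transfer_op \<kappa> g) \<le> ennreal \<gamma> * L1w_norm 2 g + ennreal C * L1_norm g"
proof -
  have km'[measurable]: "(\<lambda>p. \<kappa> (fst p) (snd p)) \<in> borel_measurable (lborel \<Otimes>\<^sub>M lborel)"
    using km by (simp add: case_prod_beta')
  have m1: "(\<lambda>(x,y). \<kappa> x y * g x) \<in> borel_measurable (lborel \<Otimes>\<^sub>M lborel)"
    unfolding case_prod_beta' by measurable
  have km''[measurable]: "(\<lambda>p. \<kappa> (snd p) (fst p)) \<in> borel_measurable (lborel \<Otimes>\<^sub>M lborel)"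
    using measurable_compose[OF measurable_pair_swap' km'] by (simp add: case_prod_beta')
  have m2: "(\<lambda>(y,x). \<kappa> x y * g x) \<in> borel_measurable (lborel \<Otimes>\<^sub>M lborel)"
    unfolding case_prod_beta' by measurable
  show Lm: "transfer_op \<kappa> g \<in> borel_measurable lborel"
    unfolding transfer_op_def
    using lborel.borel_measurable_lebesgue_integral[of "\<lambda>y x. \<kappa> x y * g x" lborel, OF m2] .
  have kx[measurable]: "(\<lambda>y. \<kappa> x y) \<in> borel_measurable lborel" for x
    using measurable_compose[OF measurable_Pair1'[of x lborel lborel] km'] by simp
  have ky[measurable]: "(\<lambda>x. \<kappa> x y) \<in> borel_measurable lborel" for y
    using measurable_compose[OF measurable_Pair2'[of y lborel lborel] km'] by simp
  have m3: "(\<lambda>(x,y). ennreal (\<kappa> x y) * ennreal \<bar>g x\<bar>) \<in> borel_measurable (lborel \<Otimes>\<^sub>M lborel)"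
    unfolding case_prod_beta' by measurable
  have m4: "(\<lambda>(x,y). ennreal (rho 2 y * \<kappa> x y) * ennreal \<bar>g x\<bar>) \<in> borel_measurable (lborel \<Otimes>\<^sub>M lborel)"
    unfolding case_prod_beta' by measurable
  have "L1_norm (transfer_op \<kappa> g) = (\<integral>\<^sup>+y. ennreal \<bar>transfer_op \<kappa> g y\<bar> \<partial>lborel)"
    by (simp add: L1_norm_def)
  also have "\<dots> \<le> (\<integral>\<^sup>+y. (\<integral>\<^sup>+x. ennreal (\<kappa> x y) * ennreal \<bar>g x\<bar> \<partial>lborel) \<partial>lborel)"
    by (intro nn_integral_mono op_pointwise kpos)
  also have "\<dots> = (\<integral>\<^sup>+x. (\<integral>\<^sup>+y. ennreal (\<kappa> x y) * ennreal \<bar>g x\<bar> \<partial>lborel) \<partial>lborel)"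
    by (rule lborel_pair.Fubini'[OF m3])
  also have "\<dots> = (\<integral>\<^sup>+x. (\<integral>\<^sup>+y. ennreal (\<kappa> x y) \<partial>lborel) * ennreal \<bar>g x\<bar> \<partial>lborel)"
    by (intro nn_integral_cong nn_integral_multc) measurable
  also have "\<dots> = L1_norm g"
    by (simp add: kmass L1_norm_def)
  finally show "L1_norm (transfer_op \<kappa> g) \<le> L1_norm g" .
  have "L1w_norm 2 (transfer_op \<kappa> g) = (\<integral>\<^sup>+y. ennreal (rho 2 y) * ennreal \<bar>transfer_op \<kappa> g y\<bar> \<partial>lborel)"
    by (simp add: L1w_norm_def ennreal_mult rho2)
  also have "\<dots> \<le> (\<integral>\<^sup>+y. ennreal (rho 2 y) * (\<integral>\<^sup>+x. ennreal (\<kappa> x y) * ennreal \<bar>g x\<bar> \<partial>lborel) \<partial>lborel)"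
    by (intro nn_integral_mono mult_left_mono op_pointwise kpos) simp
  also have "\<dots> = (\<integral>\<^sup>+y. (\<integral>\<^sup>+x. ennreal (rho 2 y * \<kappa> x y) * ennreal \<bar>g x\<bar> \<partial>lborel) \<partial>lborel)"
  proof (rule nn_integral_cong)
    fix y :: 'a
    have "ennreal (rho 2 y) * (\<integral>\<^sup>+x. ennreal (\<kappa> x y) * ennreal \<bar>g x\<bar> \<partial>lborel)
        = (\<integral>\<^sup>+x. ennreal (rho 2 y) * (ennreal (\<kappa> x y) * ennreal \<bar>g x\<bar>) \<partial>lborel)"
      by (rule nn_integral_cmult[symmetric]) measurable
    also have "\<dots> = (\<integral>\<^sup>+x. ennreal (rho 2 y * \<kappa> x y) * ennreal \<bar>g x\<bar> \<partial>lborel)"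
      using kpos by (intro nn_integral_cong) (simp add: ennreal_mult rho2 mult.assoc)
    finally show "ennreal (rho 2 y) * (\<integral>\<^sup>+x. ennreal (\<kappa> x y) * ennreal \<bar>g x\<bar> \<partial>lborel)
        = (\<integral>\<^sup>+x. ennreal (rho 2 y * \<kappa> x y) * ennreal \<bar>g x\<bar> \<partial>lborel)" .
  qed
  also have "\<dots> = (\<integral>\<^sup>+x. (\<integral>\<^sup>+y. ennreal (rho 2 y * \<kappa> x y) * ennreal \<bar>g x\<bar> \<partial>lborel) \<partial>lborel)"
    by (rule lborel_pair.Fubini'[OF m4])
  also have "\<dots> = (\<integral>\<^sup>+x. (\<integral>\<^sup>+y. ennreal (rho 2 y * \<kappa> x y) \<partial>lborel) * ennreal \<bar>g x\<bar> \<partial>lborel)"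
    by (intro nn_integral_cong nn_integral_multc) measurable
  also have "\<dots> \<le> (\<integral>\<^sup>+x. ennreal (\<gamma> * rho 2 x + C) * ennreal \<bar>g x\<bar> \<partial>lborel)"
    by (intro nn_integral_mono mult_right_mono kmom) simp
  also have "\<dots> = (\<integral>\<^sup>+x. ennreal \<gamma> * ennreal (rho 2 x * \<bar>g x\<bar>) + ennreal C * ennreal \<bar>g x\<bar> \<partial>lborel)"
  proof (rule nn_integral_cong)
    fix x :: 'a
    have r: "rho 2 x \<ge> 0" by (simp add: rho2)
    have "ennreal (\<gamma> * rho 2 x + C) * ennreal \<bar>g x\<bar> = ennreal ((\<gamma> * rho 2 x + C) * \<bar>g x\<bar>)"
      by (rule ennreal_mult[symmetric]) (use \<gamma> C r in auto)
    also have "(\<gamma> * rho 2 x + C) * \<bar>g x\<bar> = \<gamma> * (rho 2 x * \<bar>g x\<bar>) + C * \<bar>g x\<bar>"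
      by (simp add: algebra_simps)
    also have "ennreal (\<gamma> * (rho 2 x * \<bar>g x\<bar>) + C * \<bar>g x\<bar>) = ennreal (\<gamma> * (rho 2 x * \<bar>g x\<bar>)) + ennreal (C * \<bar>g x\<bar>)"
      by (rule ennreal_plus) (use \<gamma> C r in auto)
    also have "ennreal (\<gamma> * (rho 2 x * \<bar>g x\<bar>)) = ennreal \<gamma> * ennreal (rho 2 x * \<bar>g x\<bar>)"
      by (rule ennreal_mult) (use \<gamma> r in auto)
    also have "ennreal (C * \<bar>g x\<bar>) = ennreal C * ennreal \<bar>g x\<bar>"
      by (rule ennreal_mult) (use C in auto)
    finally show "ennreal (\<gamma> * rho 2 x + C) * ennreal \<bar>g x\<bar> = ennreal \<gamma> * ennreal (rho 2 x * \<bar>g x\<bar>) + ennreal C * ennreal \<bar>g x\<bar>" .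
  qed
  also have "\<dots> = ennreal \<gamma> * L1w_norm 2 g + ennreal C * L1_norm g"
    unfolding L1w_norm_def L1_norm_def
    by (subst nn_integral_add) (auto simp: nn_integral_cmult)
  finally show "L1w_norm 2 (transfer_op \<kappa> g) \<le> ennreal \<gamma> * L1w_norm 2 g + ennreal C * L1_norm g" .
qed

lemma L2_bound:
  fixes \<kappa> :: "'a::euclidean_space \<Rightarrow> 'a \<Rightarrow> real"
  assumes kpos: "\<And>x y. 0 \<le> \<kappa> x y" and kb: "\<And>x y. \<kappa> x y \<le> C0" and C0: "C0 \<ge> 0"
    and D: "compact D" and g[measurable]: "g \<in> borel_measurable lborel"
  shows "L2_on_norm D (transfer_op \<kappa> g) \<le> ennreal (C0 * sqrt (measure lborel D) + 1) * L1_norm g"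
proof (cases "L1_norm g = \<infinity>")
  case True
  have "ennreal (C0 * sqrt (measure lborel D) + 1) \<noteq> 0" using C0 by (simp add: add_nonneg_pos)
  then show ?thesis using True by (simp add: ennreal_mult_top)
next
  case False
  then obtain a where a: "L1_norm g = ennreal a" "0 \<le> a" by (cases "L1_norm g") auto
  define m where "m = measure lborel D"
  have m: "m \<ge> 0" by (simp add: m_def)
  have emD: "emeasure lborel D = ennreal m"
    using emeasure_compact_finite[OF D] unfolding m_def by (simp add: emeasure_eq_ennreal_measure)
  have pw: "\<bar>transfer_op \<kappa> g y\<bar> \<le> C0 * a" for y
  proof -
    have "ennreal \<bar>transfer_op \<kappa> g y\<bar> \<le> (\<integral>\<^sup>+x. ennreal (\<kappa> x y) * ennreal \<bar>g x\<bar> \<partial>lborel)"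
      by (rule op_pointwise[OF kpos])
    also have "\<dots> \<le> (\<integral>\<^sup>+x. ennreal C0 * ennreal \<bar>g x\<bar> \<partial>lborel)"
      by (intro nn_integral_mono mult_right_mono ennreal_leI kb) auto
    also have "\<dots> = ennreal C0 * L1_norm g"
      unfolding L1_norm_def by (rule nn_integral_cmult) measurable
    also have "\<dots> = ennreal (C0 * a)" using a C0 by (simp add: ennreal_mult)
    finally show ?thesis using C0 a by (simp add: ennreal_le_iff)
  qed
  define I where "I = (\<integral>\<^sup>+ x. indicator D x * ennreal ((transfer_op \<kappa> g x)\<^sup>2) \<partial>lborel)"
  have "I \<le> (\<integral>\<^sup>+ x. indicator D x * ennreal ((C0 * a)\<^sup>2) \<partial>lborel)"
    unfolding I_def
  proof (intro nn_integral_mono mult_left_mono)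
    fix x
    have "(transfer_op \<kappa> g x)\<^sup>2 \<le> (C0 * a)\<^sup>2"
      using pw[of x] by (simp add: abs_le_square_iff[symmetric] power2_abs abs_le_iff) 
    then show "ennreal ((transfer_op \<kappa> g x)\<^sup>2) \<le> ennreal ((C0 * a)\<^sup>2)" by simp
  qed simp
  also have "\<dots> = ennreal ((C0 * a)\<^sup>2) * emeasure lborel D"
  proof -
    have Ds: "D \<in> sets lborel" using D by (simp add: compact_imp_closed borel_closed)
    have "(\<integral>\<^sup>+ x. indicator D x * ennreal ((C0 * a)\<^sup>2) \<partial>lborel)
        = (\<integral>\<^sup>+ x. ennreal ((C0 * a)\<^sup>2) * indicator D x \<partial>lborel)"
      by (simp only: mult.commute)
    also have "\<dots> = ennreal ((C0 * a)\<^sup>2) * emeasure lborel D"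
      by (rule nn_integral_cmult_indicator[OF Ds])
    finally show ?thesis .
  qed
  also have "\<dots> = ennreal ((C0 * a)\<^sup>2 * m)" using emD m by (simp add: ennreal_mult)
  finally have I: "I \<le> ennreal ((C0 * a)\<^sup>2 * m)" .
  then have If: "I \<noteq> \<infinity>" by (auto simp: top_unique)
  have "enn2real I \<le> enn2real (ennreal ((C0 * a)\<^sup>2 * m))" by (rule enn2real_mono[OF I]) simp
  then have "enn2real I \<le> (C0 * a)\<^sup>2 * m" using m by simp
  then have "sqrt (enn2real I) \<le> sqrt ((C0 * a)\<^sup>2 * m)" by simp
  also have "\<dots> = C0 * a * sqrt m" using C0 a m by (simp add: real_sqrt_mult)
  also have "\<dots> \<le> (C0 * sqrt m + 1) * a" using a by (simp add: algebra_simps)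
  finally have "ennsqrt I \<le> ennreal ((C0 * sqrt m + 1) * a)"
    using If by (simp add: ennsqrt_def ennreal_leI)
  then show ?thesis
    using a C0 m unfolding L2_on_norm_def I_def[symmetric] m_def[symmetric]
    by (simp add: ennreal_mult)
qed

lemma sq_split:
  fixes p q :: real assumes e: "e > 0"
  shows "(p + q)\<^sup>2 \<le> (1 + e) * p\<^sup>2 + (1 + 1/e) * q\<^sup>2"
proof -
  have "0 \<le> (e * p - q)\<^sup>2 / e" using e by simp
  also have "(e * p - q)\<^sup>2 / e = e * p\<^sup>2 + q\<^sup>2 / e - 2 * p * q"
    using e by (simp add: power2_eq_square field_simps)
  finally show ?thesis by (simp add: power2_eq_square field_simps)
qed

lemma kmom_bound:
  fixes \<kappa> :: "'a::euclidean_space \<Rightarrow> 'a \<Rightarrow> real" and T :: "'a \<Rightarrow> 'a"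
  assumes kpos: "\<And>x y. 0 \<le> \<kappa> x y"
    and kmass: "\<And>x. (\<integral>\<^sup>+y. ennreal (\<kappa> x y) \<partial>lborel) = 1"
    and upper: "\<And>x y. \<kappa> x y \<le> C0 * exp (- l * (norm (T x - y))\<^sup>2)"
    and l: "l > 0" and C0: "C0 \<ge> 0"
    and G: "(\<integral>\<^sup>+ z. ennreal (exp (- ((norm z)\<^sup>2 / (2 * (1/l))))) \<partial>(lborel::'a measure)) = ennreal Gr"
    and Gr: "Gr \<ge> 0"
    and ky[measurable]: "\<And>x. (\<lambda>y. \<kappa> x y) \<in> borel_measurable lborel"
    and e: "e > 0"
  shows "(\<integral>\<^sup>+y. ennreal (rho 2 y * \<kappa> x y) \<partial>lborel)
           \<le> ennreal (1 + (1 + e) * (norm (T x))\<^sup>2 + (1 + 1/e) * C0 * (2/l) * Gr)"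
proof -
  define A where "A = 1 + (1 + e) * (norm (T x))\<^sup>2"
  define B where "B = (1 + 1/e) * C0 * (2/l)"
  define h where "h z = exp (- ((norm z)\<^sup>2 / (2 * (1/l))))" for z :: 'a
  have A: "A \<ge> 0" using e by (simp add: A_def)
  have B: "B \<ge> 0" using e C0 l by (simp add: B_def)
  have hm[measurable]: "h \<in> borel_measurable borel"
    unfolding h_def[abs_def] by (intro borel_measurable_continuous_onI continuous_intros) (use l in auto)
  have pw: "rho 2 y * \<kappa> x y \<le> A * \<kappa> x y + B * h (y - T x)" for y
  proof -
    define s where "s = (norm (y - T x))\<^sup>2"
    have s: "s \<ge> 0" by (simp add: s_def)
    have "norm y \<le> norm (T x) + norm (y - T x)"
      using norm_triangle_ineq[of "T x" "y - T x"] by simp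
    then have "(norm y)\<^sup>2 \<le> (norm (T x) + norm (y - T x))\<^sup>2"
      by (intro power_mono) auto
    also have "\<dots> \<le> (1 + e) * (norm (T x))\<^sup>2 + (1 + 1/e) * s"
      unfolding s_def by (rule sq_split[OF e])
    finally have ny: "(norm y)\<^sup>2 \<le> (1 + e) * (norm (T x))\<^sup>2 + (1 + 1/e) * s" .
    have sk: "s * \<kappa> x y \<le> C0 * (2/l) * h (y - T x)"
    proof -
      have "s * \<kappa> x y \<le> s * (C0 * exp (- l * s))"
        using upper[of x y] s by (intro mult_left_mono) (auto simp: s_def norm_minus_commute)
      also have "\<dots> = C0 * (s * exp (- l * s))" by simp
      also have "\<dots> \<le> C0 * ((2 / l) * exp (- (s / (2 * (1/l)))))"
        using moment_bound[OF l s] C0 by (rule mult_left_mono)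
      finally show ?thesis by (simp add: h_def s_def)
    qed
    have "rho 2 y * \<kappa> x y = \<kappa> x y + (norm y)\<^sup>2 * \<kappa> x y" by (simp add: rho2 algebra_simps)
    also have "\<dots> \<le> \<kappa> x y + ((1 + e) * (norm (T x))\<^sup>2 + (1 + 1/e) * s) * \<kappa> x y"
      using ny kpos[of x y] by (intro add_left_mono mult_right_mono) auto
    also have "\<dots> = A * \<kappa> x y + (1 + 1/e) * (s * \<kappa> x y)" by (simp add: A_def algebra_simps)
    also have "\<dots> \<le> A * \<kappa> x y + (1 + 1/e) * (C0 * (2/l) * h (y - T x))"
      using sk e by (intro add_left_mono mult_left_mono) auto
    also have "\<dots> = A * \<kappa> x y + B * h (y - T x)" by (simp add: B_def)
    finally show ?thesis .
  qed
  have trans: "(\<integral>\<^sup>+y. ennreal (h (y - T x)) \<partial>lborel) = ennreal Gr"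
  proof -
    have "(\<integral>\<^sup>+y. ennreal (h (y - T x)) \<partial>lborel) = (\<integral>\<^sup>+y. ennreal (h (y - T x)) \<partial>(distr lborel borel ((+) (T x))))"
      by (simp only: lborel_distr_plus)
    also have "\<dots> = (\<integral>\<^sup>+z. ennreal (h ((T x + z) - T x)) \<partial>lborel)"
      by (rule nn_integral_distr) measurable
    also have "\<dots> = ennreal Gr" using G by (simp add: h_def)
    finally show ?thesis .
  qed
  have "(\<integral>\<^sup>+y. ennreal (rho 2 y * \<kappa> x y) \<partial>lborel)
      \<le> (\<integral>\<^sup>+y. ennreal A * ennreal (\<kappa> x y) + ennreal B * ennreal (h (y - T x)) \<partial>lborel)"
  proof (intro nn_integral_mono)
    fix y
    have "ennreal (rho 2 y * \<kappa> x y) \<le> ennreal (A * \<kappa> x y + B * h (y - T x))"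
      using pw[of y] by (rule ennreal_leI)
    also have "\<dots> = ennreal A * ennreal (\<kappa> x y) + ennreal B * ennreal (h (y - T x))"
      using A B kpos[of x y] by (simp add: ennreal_plus ennreal_mult h_def)
    finally show "ennreal (rho 2 y * \<kappa> x y) \<le> ennreal A * ennreal (\<kappa> x y) + ennreal B * ennreal (h (y - T x))" .
  qed
  also have "\<dots> = ennreal A * (\<integral>\<^sup>+y. ennreal (\<kappa> x y) \<partial>lborel) + ennreal B * (\<integral>\<^sup>+y. ennreal (h (y - T x)) \<partial>lborel)"
    by (subst nn_integral_add) (auto simp: nn_integral_cmult)
  also have "\<dots> = ennreal (A + B * Gr)"
    using kmass trans A B Gr by (simp add: ennreal_mult ennreal_plus)
  finally show ?thesis by (simp add: A_def B_def)
qed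

lemma iterate:
  fixes L :: "('a::euclidean_space \<Rightarrow> real) \<Rightarrow> ('a \<Rightarrow> real)"
  assumes meas: "\<And>g. g \<in> borel_measurable lborel \<Longrightarrow> L g \<in> borel_measurable lborel"
    and N1: "\<And>g. g \<in> borel_measurable lborel \<Longrightarrow> L1_norm (L g) \<le> L1_norm g"
    and N2: "\<And>g. g \<in> borel_measurable lborel \<Longrightarrow> L1w_norm 2 (L g) \<le> ennreal \<gamma> * L1w_norm 2 g + ennreal C * L1_norm g"
    and ND: "\<And>g. g \<in> borel_measurable lborel \<Longrightarrow> L2_on_norm D (L g) \<le> ennreal K * L1_norm g"
    and \<gamma>: "0 \<le> \<gamma>" "\<gamma> < 1" and C: "C \<ge> 0" and K: "K \<ge> 0"
    and f: "f \<in> borel_measurable lborel"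
  shows "strong_norm D ((L ^^ n) f) \<le> ennreal (1 * \<gamma> ^ n) * strong_norm D f + ennreal (C / (1 - \<gamma>) + K) * L1_norm f"
proof -
  define S where "S = C / (1 - \<gamma>)"
  have S: "S \<ge> 0" using C \<gamma> by (simp add: S_def)
  have SS: "\<gamma> * S + C = S" using \<gamma> by (simp add: S_def field_simps)
  have m: "(L ^^ k) f \<in> borel_measurable lborel" for k
  proof (induction k)
    case 0
    show ?case using f by simp
  next
    case (Suc k)
    show ?case using meas[OF Suc.IH] by simp
  qed
  have n1: "L1_norm ((L ^^ k) f) \<le> L1_norm f" for k
  proof (induction k)
    case (Suc k)
    then show ?case using N1[OF m[of k]] by (simp add: order_trans)
  qed simp
  have n2: "L1w_norm 2 ((L ^^ k) f) \<le> ennreal (\<gamma> ^ k) * L1w_norm 2 f + ennreal S * L1_norm f" for k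
  proof (induction k)
    case 0
    then show ?case by simp
  next
    case (Suc k)
    have "L1w_norm 2 ((L ^^ Suc k) f) \<le> ennreal \<gamma> * L1w_norm 2 ((L ^^ k) f) + ennreal C * L1_norm ((L ^^ k) f)"
      using N2[OF m[of k]] by simp
    also have "\<dots> \<le> ennreal \<gamma> * (ennreal (\<gamma> ^ k) * L1w_norm 2 f + ennreal S * L1_norm f) + ennreal C * L1_norm f"
      by (intro add_mono mult_left_mono Suc.IH n1) auto
    also have "\<dots> = ennreal (\<gamma> ^ Suc k) * L1w_norm 2 f + ennreal (\<gamma> * S + C) * L1_norm f"
    proof -
      have e1: "ennreal (\<gamma> ^ Suc k) = ennreal \<gamma> * ennreal (\<gamma> ^ k)"
        using \<gamma> by (simp add: ennreal_mult)
      have e2: "ennreal (\<gamma> * S + C) = ennreal \<gamma> * ennreal S + ennreal C"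
        using \<gamma> S C by (simp add: ennreal_mult ennreal_plus)
      show ?thesis unfolding e1 e2 by (simp add: algebra_simps)
    qed
    finally show ?case unfolding SS .
  qed
  show ?thesis
  proof (cases n)
    case 0
    have "strong_norm D f \<le> ennreal (1 * \<gamma> ^ 0) * strong_norm D f + ennreal (C / (1 - \<gamma>) + K) * L1_norm f"
      by simp
    then show ?thesis using 0 by simp
  next
    case (Suc k)
    have nd: "L2_on_norm D ((L ^^ n) f) \<le> ennreal K * L1_norm f"
    proof -
      have "L2_on_norm D (L ((L ^^ k) f)) \<le> ennreal K * L1_norm ((L ^^ k) f)" by (rule ND[OF m[of k]])
      also have "\<dots> \<le> ennreal K * L1_norm f" by (rule mult_left_mono[OF n1]) simp
      finally show ?thesis using Suc by simp
    qed
    have "strong_norm D ((L ^^ n) f) = L1w_norm 2 ((L ^^ n) f) + L2_on_norm D ((L ^^ n) f)"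
      by (simp add: strong_norm_def)
    also have "\<dots> \<le> (ennreal (\<gamma> ^ n) * L1w_norm 2 f + ennreal S * L1_norm f) + ennreal K * L1_norm f"
      by (intro add_mono n2 nd)
    also have "\<dots> \<le> ennreal (\<gamma> ^ n) * strong_norm D f + ennreal (S + K) * L1_norm f"
      using S K by (auto simp: strong_norm_def ennreal_plus algebra_simps intro!: add_mono mult_left_mono)
    finally show ?thesis by (simp add: S_def)
  qed
qed

theorem lemma3p5:
  fixes b :: "'a::euclidean_space \<Rightarrow> 'a"
    and \<theta> :: "real \<Rightarrow> 'a \<Rightarrow> 'a"
    and M :: "'w measure"
    and W :: "real \<Rightarrow> 'w \<Rightarrow> 'a"
    and X :: "'a \<Rightarrow> real \<Rightarrow> 'w \<Rightarrow> 'a"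
    and \<kappa> :: "'a \<Rightarrow> 'a \<Rightarrow> real"
    and Dx Dy :: "'a \<Rightarrow> 'a \<Rightarrow> 'a"
    and D :: "'a set"
    and lam0 lam1 C0 C1 :: real
  assumes A: "locally_lipschitz_drift b"
    and B: "dissipative_drift b"
    and flow: "is_flow b \<theta>"
    and BM: "is_brownian_motion M W"
    and sol: "is_sde_solution M b W X"
    and dens: "\<And>x. distributed M lborel (X x 1) (\<lambda>y. ennreal (\<kappa> x y))"
    and cont: "continuous_on UNIV (\<lambda>(x, y). \<kappa> x y)"
    and pos_consts: "0 < lam0" "lam0 \<le> 1" "0 < lam1" "lam1 \<le> 1" "1 \<le> C0" "1 \<le> C1"
    and lower: "\<And>x y. exp (- (norm (\<theta> 1 x - y))\<^sup>2 / lam0) / C0 \<le> \<kappa> x y"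
    and upper: "\<And>x y. \<kappa> x y \<le> C0 * exp (- lam0 * (norm (\<theta> 1 x - y))\<^sup>2)"
    and grad_x: "\<And>x y. ((\<lambda>x'. \<kappa> x' y) has_derivative (\<lambda>h. Dx x y \<bullet> h)) (at x)"
    and grad_y: "\<And>x y. ((\<lambda>y'. \<kappa> x y') has_derivative (\<lambda>h. Dy x y \<bullet> h)) (at y)"
    and grad_bounds: "\<And>x y. norm (Dx x y) \<le> C1 * exp (- lam1 * (norm (\<theta> 1 x - y))\<^sup>2)"
                     "\<And>x y. norm (Dy x y) \<le> C1 * exp (- lam1 * (norm (\<theta> 1 x - y))\<^sup>2)"
    and D: "compact D" "0 \<in> interior D"
  shows "\<exists>Ac Bc lam::real. Ac > 0 \<and> Bc > 0 \<and> 0 < lam \<and> lam < 1 \<and>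
           (\<forall>f\<in>strong_space D. \<forall>n::nat.
              strong_norm D ((transfer_op \<kappa> ^^ n) f)
                \<le> ennreal (Ac * lam ^ n) * strong_norm D f + ennreal Bc * L1_norm f)"
  proof -
  obtain c1 c2 :: real where c2: "c2 > 0" and diss: "\<And>x. b x \<bullet> x \<le> c1 - c2 * (norm x)\<^sup>2"
    using B unfolding dissipative_drift_def by blast
  have pM: "prob_space M" using BM unfolding is_brownian_motion_def by blast
  have C0pos: "C0 > 0" using pos_consts by simp
  have kpos: "0 \<le> \<kappa> x y" for x y
  proof -
    have "0 \<le> exp (- (norm (\<theta> 1 x - y))\<^sup>2 / lam0) / C0" using C0pos by simp
    then show ?thesis using lower[of x y] by linarith
  qed
  have kb: "\<kappa> x y \<le> C0" for x y
  proof -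
    have "exp (- lam0 * (norm (\<theta> 1 x - y))\<^sup>2) \<le> 1" using pos_consts by simp
    then have "C0 * exp (- lam0 * (norm (\<theta> 1 x - y))\<^sup>2) \<le> C0 * 1"
      using C0pos by (intro mult_left_mono) auto
    then show ?thesis using upper[of x y] by simp
  qed
  have km: "(\<lambda>(x, y). \<kappa> x y) \<in> borel_measurable (lborel \<Otimes>\<^sub>M lborel)"
    by (rule kmeas[OF cont])
  have km': "(\<lambda>p. \<kappa> (fst p) (snd p)) \<in> borel_measurable (lborel \<Otimes>\<^sub>M lborel)"
    using km by (simp add: case_prod_beta')
  have ky: "(\<lambda>y. \<kappa> x y) \<in> borel_measurable lborel" for x
    using measurable_compose[OF measurable_Pair1'[of x lborel lborel] km'] by simp
  have kmass: "(\<integral>\<^sup>+y. ennreal (\<kappa> x y) \<partial>lborel) = 1" for x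
    by (rule dist_mass[OF dens pM])
  have gf: "(\<integral>\<^sup>+ z. ennreal (exp (- (norm z)\<^sup>2 / (2 * (1/lam0)))) \<partial>(lborel::'a measure)) < \<infinity>"
    using gauss_fin[OF BM, of "1/lam0"] pos_consts by simp
  have geq: "(\<lambda>z::'a. ennreal (exp (- ((norm z)\<^sup>2 / (2 * (1/lam0)))))) = (\<lambda>z. ennreal (exp (- (norm z)\<^sup>2 / (2 * (1/lam0)))))"
    by (simp add: fun_eq_iff)
  obtain Gr where G: "(\<integral>\<^sup>+ z. ennreal (exp (- ((norm z)\<^sup>2 / (2 * (1/lam0))))) \<partial>(lborel::'a measure)) = ennreal Gr"
    and Gr: "Gr \<ge> 0"
    using gf unfolding geq[symmetric] by (cases "(\<integral>\<^sup>+ z. ennreal (exp (- ((norm z)\<^sup>2 / (2 * (1/lam0))))) \<partial>(lborel::'a measure))") auto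
  define e where "e = (exp (2 * c2) - 1) / 2"
  have e: "e > 0" using c2 by (simp add: e_def)
  define \<gamma> where "\<gamma> = (1 + e) * exp (-2 * c2)"
  have \<gamma>eq: "\<gamma> = (1 + exp (-2 * c2)) / 2"
    unfolding \<gamma>_def e_def by (simp add: field_simps exp_minus)
  have \<gamma>0: "\<gamma> > 0" using e by (simp add: \<gamma>_def)
  have \<gamma>1: "\<gamma> < 1" using c2 by (simp add: \<gamma>eq)
  define C where "C = 1 + (1 + e) * (\<bar>c1\<bar> / c2) + (1 + 1/e) * C0 * (2/lam0) * Gr"
  have C: "C \<ge> 0" using e c2 C0pos pos_consts Gr by (simp add: C_def)
  have kmom: "(\<integral>\<^sup>+y. ennreal (rho 2 y * \<kappa> x y) \<partial>lborel) \<le> ennreal (\<gamma> * rho 2 x + C)" for x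
  proof -
    have "(\<integral>\<^sup>+y. ennreal (rho 2 y * \<kappa> x y) \<partial>lborel)
           \<le> ennreal (1 + (1 + e) * (norm (\<theta> 1 x))\<^sup>2 + (1 + 1/e) * C0 * (2/lam0) * Gr)"
      by (rule kmom_bound[where T="\<theta> 1", OF kpos kmass upper _ _ G Gr ky e]) (use pos_consts C0pos in auto)
    also have "\<dots> \<le> ennreal (\<gamma> * rho 2 x + C)"
    proof (rule ennreal_leI)
      have fb: "(norm (\<theta> 1 x))\<^sup>2 \<le> exp (-2*c2) * (norm x)\<^sup>2 + \<bar>c1\<bar> / c2"
        by (rule flow_bound[OF flow diss c2])
      have "(1 + e) * (norm (\<theta> 1 x))\<^sup>2 \<le> (1 + e) * (exp (-2*c2) * (norm x)\<^sup>2 + \<bar>c1\<bar> / c2)"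
        using fb e by (intro mult_left_mono) auto
      moreover have "(1 + e) * (exp (-2*c2) * (norm x)\<^sup>2 + \<bar>c1\<bar> / c2) = \<gamma> * (norm x)\<^sup>2 + (1 + e) * (\<bar>c1\<bar> / c2)"
        by (simp add: \<gamma>_def algebra_simps)
      ultimately show "1 + (1 + e) * (norm (\<theta> 1 x))\<^sup>2 + (1 + 1/e) * C0 * (2/lam0) * Gr \<le> \<gamma> * rho 2 x + C"
        using \<gamma>0 by (simp add: rho2 C_def algebra_simps)
    qed
    finally show ?thesis .
  qed
  define K where "K = C0 * sqrt (measure lborel D) + 1"
  have K: "K > 0" using C0pos by (simp add: K_def add_nonneg_pos)
  have main: "strong_norm D ((transfer_op \<kappa> ^^ n) f) \<le> ennreal (1 * \<gamma> ^ n) * strong_norm D f + ennreal (C / (1 - \<gamma>) + K) * L1_norm f"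
    if f: "f \<in> strong_space D" for f n
  proof (rule iterate)
    show "f \<in> borel_measurable lborel" using f by (simp add: strong_space_def)
    show "\<And>g. g \<in> borel_measurable lborel \<Longrightarrow> transfer_op \<kappa> g \<in> borel_measurable lborel"
      by (rule op_bounds(1)[OF km kpos kmass kmom _ C]) (use \<gamma>0 in auto)
    show "\<And>g. g \<in> borel_measurable lborel \<Longrightarrow> L1_norm (transfer_op \<kappa> g) \<le> L1_norm g"
      by (rule op_bounds(2)[OF km kpos kmass kmom _ C]) (use \<gamma>0 in auto)
    show "\<And>g. g \<in> borel_measurable lborel \<Longrightarrow> L1w_norm 2 (transfer_op \<kappa> g) \<le> ennreal \<gamma> * L1w_norm 2 g + ennreal C * L1_norm g"
      by (rule op_bounds(3)[OF km kpos kmass kmom _ C]) (use \<gamma>0 in auto)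
    show "\<And>g. g \<in> borel_measurable lborel \<Longrightarrow> L2_on_norm D (transfer_op \<kappa> g) \<le> ennreal K * L1_norm g"
      unfolding K_def by (rule L2_bound[OF kpos kb _ D(1)]) (use C0pos in auto)
  qed (use \<gamma>0 \<gamma>1 C K in auto)
  show ?thesis
    using main \<gamma>0 \<gamma>1 K C
    by (intro exI[of _ 1] exI[of _ "C / (1 - \<gamma>) + K"] exI[of _ \<gamma>]) (auto intro!: add_nonneg_pos)
qed

end
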